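(* Let $p$ be an odd prime and let $a,b_1,b_2,b_3,c$ be integers such that all factorials appearing on the right-hand side below are factorials of nonnegative integers less than $p$. Then in $\mathbb{F}_p$ $$\int_{[1;1;1]_p}t^a(1-t)^{b_1}(s-t)^{p-c}(1-s)^{b_2}(u-s)^{p-c}(1-u)^{b_3}\,dt\,ds\,du$$ $$=-\,\frac{a!\,(b_1+b_2+b_3-2c+2)!}{(a+b_1+b_2+b_3-2c+3-p)!}\cdot\frac{(p-c)!\,(b_2+b_3-c+1)!}{(b_2+b_3-2c+2)!}\cdot\frac{(p-c)!\,b_3!}{(b_3-c+1)!}.$$
   Context: For a polynomial $P(x_1,\dots,x_k)=\sum_d c_dx_1^{d_1}\cdots x_k^{d_k}$ with coefficients in $\mathbb{F}_p$ and $l\in\mathbb{Z}_{>0}^k$, the $\mathbb{F}_p$-integral $\int_{[l_1,\dots,l_k]_p}P\,dx$ is the coefficient $c_{l_1p-1,\dots,l_kp-1}$. Thus the left-hand side is the coefficient of $t^{p-1}s^{p-1}u^{p-1}$ in the integrand reduced mod $p$. Factorials are taken in $\mathbb{F}_p$. *)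

theory Defs
  imports "HOL-Computational_Algebra.Polynomial" "Berlekamp_Zassenhaus.Finite_Field"
begin

text \<open>Trivariate polynomials in t, s, u are represented as nested univariate
polynomials: a polynomial in u whose coefficients are polynomials in s whose
coefficients are polynomials in t.\<close>

definition var_t :: "'a::comm_ring_1 poly poly poly" where
  "var_t = [:[:[:0, 1:]:]:]"

definition var_s :: "'a::comm_ring_1 poly poly poly" where
  "var_s = [:[:0, 1:]:]"

definition var_u :: "'a::comm_ring_1 poly poly poly" where
  "var_u = [:0, 1:]"

definition coeff3 :: "'a::comm_ring_1 poly poly poly \<Rightarrow> nat \<Rightarrow> nat \<Rightarrow> nat \<Rightarrow> 'a" where
  "coeff3 P i j k = coeff (coeff (coeff P k) j) i"

text \<open>F_p-integral over [l1,l2,l3]_p in the variables (t,s,u):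
the coefficient of t^(l1 p - 1) s^(l2 p - 1) u^(l3 p - 1).\<close>
definition Fp_integral3 :: "nat \<Rightarrow> nat \<Rightarrow> nat \<Rightarrow> nat \<Rightarrow> 'a::comm_ring_1 poly poly poly \<Rightarrow> 'a" where
  "Fp_integral3 p l1 l2 l3 P = coeff3 P (l1 * p - 1) (l2 * p - 1) (l3 * p - 1)"

end

theory Submission imports Defs "HOL-Number_Theory.Residues" begin

lemma cong_to_ring:
  assumes "[x = y] (mod int p)" "of_nat p = (0::'a::comm_ring_1)"
  shows "(of_int x :: 'a) = of_int y"
proof -
  have "int p dvd x - y" using assms(1) by (simp add: cong_iff_dvd_diff)
  then obtain k where "x - y = int p * k" by (rule dvdE)
  then have "(of_int (x - y) :: 'a) = of_int (int p * k)" by (rule arg_cong)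
  then have "(of_int x :: 'a) - of_int y = of_nat p * of_int k"
    by (simp only: of_int_diff of_int_mult of_int_of_nat_eq)
  then show ?thesis using assms(2) by simp
qed

lemma wilson_gen:
  assumes "prime p" "of_nat p = (0::'a::comm_ring_1)" "e \<le> p - 1"
  shows "(of_nat (fact e * fact (p - 1 - e)) :: 'a) = (-1) ^ (e+1)"
  using assms(3)
proof (induction e)
  case 0
  have "(of_int (fact (p - 1)) :: 'a) = of_int (-1)"
    using cong_to_ring[OF wilson_theorem[OF assms(1)] assms(2)] .
  moreover have "(fact (p-1)::int) = int (fact (p-1))" by simp
  ultimately have "(of_nat (fact (p - 1)) :: 'a) = -1"
    by (simp only: of_int_of_nat_eq of_int_minus of_int_1)
  then show ?case by simp
next
  case (Suc e)
  have p2: "p \<ge> 2" using assms(1) prime_ge_2_nat by blast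
  have IH: "(of_nat (fact e * fact (p - 1 - e)) :: 'a) = (-1) ^ (e+1)" using Suc by simp
  have f1: "fact (p - 1 - e) = (p - 1 - e) * (fact (p - 1 - Suc e) :: nat)"
  proof -
    have h: "p - 1 - e = Suc (p - 1 - Suc e)" using Suc.prems by simp
    show ?thesis unfolding h by simp
  qed
  have f2: "fact (Suc e) = Suc e * (fact e :: nat)" by simp
  have pe: "(of_nat (p - 1 - e) :: 'a) = - of_nat (Suc e)"
  proof -
    have "p - 1 - e + Suc e = p" using Suc.prems p2 by simp
    then have "(of_nat (p - 1 - e + Suc e) :: 'a) = 0" using assms(2) by simp
    then have "(of_nat (p - 1 - e) :: 'a) + of_nat (Suc e) = 0"
      by (simp only: of_nat_add)
    then show ?thesis by (simp only: eq_neg_iff_add_eq_0)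
  qed
  have "(of_nat (fact (Suc e) * fact (p - 1 - Suc e)) :: 'a)
      = - of_nat (fact e * fact (p - 1 - e))"
    unfolding f1 f2 of_nat_mult pe by (simp add: algebra_simps)
  then show ?case using IH by simp
qed

lemma d_gen:
  fixes U V :: "'a::idom poly"
  assumes "pderiv U = 1" "pderiv V = -1"
  shows "pderiv (U^(Suc e) * V^(Suc b))
     = smult (of_nat (Suc e)) (U^e * V^(Suc b)) - smult (of_nat (Suc b)) (U^(Suc e) * V^b)"
  unfolding pderiv_mult pderiv_power_Suc assms
  by (simp add: smult_diff_right mult_ac ring_distribs del: power_Suc)

lemma split_gen:
  fixes U V :: "'a::idom poly"
  assumes "V = [:c:] - U"
  shows "U^e * V^(Suc b) = smult c (U^e * V^b) - U^(Suc e) * V^b"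
proof -
  have "U^e * V^(Suc b) = (U^e * V^b) * ([:c:] - U)" using assms by (simp add: mult_ac)
  also have "\<dots> = smult c (U^e * V^b) - U^(Suc e) * V^b"
    by (simp add: right_diff_distrib mult_ac)
  finally show ?thesis .
qed

lemma rec_step:
  fixes x :: "'a::idom"
  assumes "of_nat (Suc N) = (0::'a)"
  shows "of_nat (e + b + 2) * coeff ([:-x,1:]^e * [:1,-1:]^(Suc b)) N
       = of_nat (Suc b) * (1 - x) * coeff ([:-x,1:]^e * [:1,-1:]^b) N"
proof -
  let ?U = "[:-x,1:]" and ?V = "[:1,-1:] :: 'a poly"
  define I where "I = coeff (?U^e * ?V^(Suc b)) N"
  define I0 where "I0 = coeff (?U^e * ?V^b) N"
  define J where "J = coeff (?U^(Suc e) * ?V^b) N"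
  have pU: "pderiv ?U = 1" by (simp add: pderiv_pCons)
  have pV: "pderiv ?V = -1" by (simp add: pderiv_pCons minus_pCons one_pCons)
  note d = d_gen[OF pU pV, of e b]
  have "coeff (pderiv (?U^(Suc e) * ?V^(Suc b))) N = 0"
    unfolding coeff_pderiv assms by simp
  then have e1: "of_nat (Suc e) * I = of_nat (Suc b) * J"
    unfolding d I_def J_def by simp
  have "?V = [:1 - x:] - ?U" by simp
  from split_gen[OF this, of e b] have e2: "I = (1 - x) * I0 - J"
    unfolding I_def I0_def J_def by simp
  have "of_nat (e + b + 2) * I = of_nat (Suc e) * I + of_nat (Suc b) * I"
    by (simp add: algebra_simps)
  also have "\<dots> = of_nat (Suc b) * J + of_nat (Suc b) * ((1 - x) * I0 - J)"
    using e1 e2 by simp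
  also have "\<dots> = of_nat (Suc b) * (1 - x) * I0"
    by (simp add: algebra_simps)
  finally show ?thesis unfolding I_def I0_def .
qed

lemma base_coeff:
  fixes x :: "'a::idom"
  shows "coeff ([:-x,1:]^e * [:1,-1:]^b) (e + b) = (-1)^b"
proof -
  have d1: "degree ([:-x,1:]^e) = e" by (rule degree_linear_power)
  have d2: "degree ([:1::'a,-1:]^b) = b" by (rule degree_linear_power_neg)
  have "coeff ([:-x,1:]^e * [:1,-1:]^b) (e + b)
      = coeff ([:-x,1:]^e) e * coeff ([:1,-1:]^b) b"
    using Polynomial.coeff_mult_degree_sum[of "[:-x,1:]^e" "[:1,-1:]^b"] unfolding d1 d2 .
  then show ?thesis by (simp add: coeff_linear_power)
qed

lemma key:
  fixes x :: "'a::idom"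
  assumes p: "prime p" "odd p" "of_nat p = (0::'a)" and eb: "e < p" "p - 1 \<le> e + b"
  shows "of_nat (fact (e+b+1-p)) * coeff ([:-x,1:]^e * [:1,-1:]^b) (p-1)
       = - of_nat (fact e * fact b) * (1-x)^(e+b+1-p)"
proof -
  have p2: "p \<ge> 2" using p(1) prime_ge_2_nat by blast
  define k where "k = b - (p - 1 - e)"
  have bk: "b = (p - 1 - e) + k" unfolding k_def using eb by simp
  show ?thesis unfolding bk
  proof (induction k)
    case 0
    have w: "(of_nat (fact e * fact (p - 1 - e)) :: 'a) = (-1) ^ (e+1)"
      using wilson_gen[OF p(1) p(3)] eb by simp
    have c: "coeff ([:-x,1:]^e * [:1,-1:]^(p-1-e)) (p-1) = (-1)^(p-1-e)"
      using base_coeff[of x e "p-1-e"] eb by simp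
    have sg: "((-1)::'a)^(p-1-e) = (-1)^e"
    proof -
      have "even (p - 1 - e + e)" using p(2) eb p2 by simp
      then have "even (p - 1 - e) = even e" by simp
      then show ?thesis by (cases "even e") (simp_all add: neg_one_even_power neg_one_odd_power)
    qed
    have m0: "e + (p - 1 - e + 0) + 1 - p = 0" using eb p2 by simp
    show ?case unfolding m0 using w c sg by simp
  next
    case (Suc k)
    define b0 where "b0 = p - 1 - e + k"
    define m where "m = e + b0 + 1 - p"
    have mb: "e + b0 + 2 = Suc m + p" unfolding m_def b0_def using eb p2 by simp
    have m1: "e + (p - 1 - e + Suc k) + 1 - p = Suc m" unfolding m_def b0_def using eb p2 by simp
    have IH: "of_nat (fact m) * coeff ([:-x,1:]^e * [:1,-1:]^b0) (p-1)
       = - of_nat (fact e * fact b0) * (1-x)^m" using Suc.IH unfolding m_def b0_def .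
    have sp: "Suc (p - 1) = p" using p2 by simp
    have R: "of_nat (e + b0 + 2) * coeff ([:-x,1:]^e * [:1,-1:]^(Suc b0)) (p-1)
       = of_nat (Suc b0) * (1 - x) * coeff ([:-x,1:]^e * [:1,-1:]^b0) (p-1)"
      by (rule rec_step) (simp only: sp p(3))
    have ofm: "(of_nat (e + b0 + 2) :: 'a) = of_nat (Suc m)" unfolding mb of_nat_add p(3) by simp
    define C where "C = coeff ([:-x,1:]^e * [:1,-1:]^(Suc b0)) (p-1)"
    define C0 where "C0 = coeff ([:-x,1:]^e * [:1,-1:]^b0) (p-1)"
    have R': "of_nat (Suc m) * C = of_nat (Suc b0) * (1 - x) * C0"
      using R unfolding ofm C_def C0_def .
    have IH': "of_nat (fact m) * C0 = - of_nat (fact e * fact b0) * (1-x)^m"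
      using IH unfolding C0_def .
    have "of_nat (fact (Suc m)) * C = of_nat (fact m) * (of_nat (Suc m) * C)"
      by (simp only: fact_Suc of_nat_id of_nat_mult mult_ac)
    also have "\<dots> = of_nat (Suc b0) * (1 - x) * (of_nat (fact m) * C0)"
      unfolding R' by (simp only: mult_ac)
    also have "\<dots> = - of_nat (fact e * fact (Suc b0)) * (1-x)^(Suc m)"
      unfolding IH' by (simp only: fact_Suc of_nat_id of_nat_mult mult_ac power_Suc mult_minus_left mult_minus_right)
    finally have "of_nat (fact (Suc m)) * C = - of_nat (fact e * fact (Suc b0)) * (1-x)^(Suc m)" .
    moreover have "Suc b0 = p - 1 - e + Suc k" unfolding b0_def by simp
    ultimately show ?case unfolding m1 C_def by simp
  qed
qed

lemma coeff_const_mult: "coeff ([:c:] * X) k = c * coeff X k"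
  by simp

lemma coeff_of_nat_mult: "coeff (of_nat n * X) k = of_nat n * coeff X k"
  by (simp add: of_nat_poly)

lemma solve:
  fixes u v w V Z1 Z2 Z3 :: "'a::field"
  assumes "u \<noteq> 0" "v \<noteq> 0" "w \<noteq> 0" "u * (v * (w * V)) = - (Z3 * Z2 * Z1)"
  shows "V = - (Z1 / u) * (Z2 / v) * (Z3 / w)"
  using assms by (simp add: field_simps)

theorem theorem3p8:
  fixes a b1 b2 b3 c :: int
  assumes p_odd: "odd CARD('p::prime_card)"
    and exps: "0 \<le> a" "0 \<le> b1" "0 \<le> b2" "0 \<le> b3" "c \<le> int CARD('p)"
    and facts: "\<forall>m \<in> {a, b1 + b2 + b3 - 2*c + 2, a + b1 + b2 + b3 - 2*c + 3 - int CARD('p),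
                     int CARD('p) - c, b2 + b3 - c + 1, b2 + b3 - 2*c + 2, b3, b3 - c + 1}.
                   0 \<le> m \<and> m < int CARD('p)"
  shows "Fp_integral3 CARD('p) 1 1 1
           ((var_t :: 'p mod_ring poly poly poly) ^ nat a * (1 - var_t) ^ nat b1
            * (var_s - var_t) ^ nat (int CARD('p) - c) * (1 - var_s) ^ nat b2
            * (var_u - var_s) ^ nat (int CARD('p) - c) * (1 - var_u) ^ nat b3)
         = - (of_nat (fact (nat a)) * of_nat (fact (nat (b1 + b2 + b3 - 2*c + 2)))
                / of_nat (fact (nat (a + b1 + b2 + b3 - 2*c + 3 - int CARD('p)))))
           * (of_nat (fact (nat (int CARD('p) - c))) * of_nat (fact (nat (b2 + b3 - c + 1)))
                / of_nat (fact (nat (b2 + b3 - 2*c + 2))))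
           * (of_nat (fact (nat (int CARD('p) - c))) * of_nat (fact (nat b3))
                / of_nat (fact (nat (b3 - c + 1))))"
proof -
  let ?p = "CARD('p)"
  define A where "A = nat a"
  define B1 where "B1 = nat b1"
  define B2 where "B2 = nat b2"
  define B3 where "B3 = nat b3"
  define e where "e = nat (int ?p - c)"
  define m3 where "m3 = e + B3 + 1 - ?p"
  define m2 where "m2 = e + (B2 + m3) + 1 - ?p"
  define m1 where "m1 = A + (B1 + m2) + 1 - ?p"
  have pr: "prime ?p" by (rule prime_card)
  have p2: "?p \<ge> 2" using pr prime_ge_2_nat by blast
  have f1: "0 \<le> b1 + b2 + b3 - 2*c + 2" "b1 + b2 + b3 - 2*c + 2 < int ?p"
    "0 \<le> a + b1 + b2 + b3 - 2*c + 3 - int ?p" "a + b1 + b2 + b3 - 2*c + 3 - int ?p < int ?p"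
    "0 \<le> int ?p - c" "int ?p - c < int ?p" "0 \<le> b2 + b3 - c + 1" "b2 + b3 - c + 1 < int ?p"
    "0 \<le> b2 + b3 - 2*c + 2" "b2 + b3 - 2*c + 2 < int ?p" "b3 < int ?p"
    "0 \<le> b3 - c + 1" "b3 - c + 1 < int ?p" "a < int ?p"
    using facts by auto
  have ie: "int e = int ?p - c" unfolding e_def using f1 by simp
  have im3: "int m3 = b3 - c + 1" unfolding m3_def using ie exps f1 B3_def by simp
  have im2: "int m2 = b2 + b3 - 2*c + 2" unfolding m2_def using ie im3 exps f1 B2_def by simp
  have im1: "int m1 = a + b1 + b2 + b3 - 2*c + 3 - int ?p"
    unfolding m1_def using im2 exps f1 A_def B1_def by simp
  have n1: "nat (b1 + b2 + b3 - 2*c + 2) = B1 + m2" using im2 exps B1_def by simp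
  have n2: "nat (b2 + b3 - c + 1) = B2 + m3" using im3 exps B2_def by simp
  have n3: "nat (b2 + b3 - 2*c + 2) = m2" using im2 by simp
  have n4: "nat (b3 - c + 1) = m3" using im3 by simp
  have n5: "nat (a + b1 + b2 + b3 - 2*c + 3 - int ?p) = m1" using im1 by simp
  have c3: "e < ?p" "?p - 1 \<le> e + B3" using ie im3 f1 B3_def exps by simp_all
  have c2: "?p - 1 \<le> e + (B2 + m3)" using ie im3 im2 f1 B2_def exps by simp
  have c1: "A < ?p" "?p - 1 \<le> A + (B1 + m2)" using im1 im2 f1 A_def B1_def exps by simp_all
  define T1 :: "'p mod_ring poly" where "T1 = [:0,1:]"
  define S2 :: "'p mod_ring poly poly" where "S2 = [:0,1:]"
  define Q where "Q = [:T1:]^A * (1 - [:T1:])^B1 * (S2 - [:T1:])^e * (1 - S2)^B2"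
  define W where "W = T1^A * (1 - T1)^B1"
  define P where "P = (var_t :: 'p mod_ring poly poly poly) ^ nat a * (1 - var_t) ^ nat b1
            * (var_s - var_t) ^ nat (int CARD('p) - c) * (1 - var_s) ^ nat b2
            * (var_u - var_s) ^ nat (int CARD('p) - c) * (1 - var_u) ^ nat b3"
  have P_eq: "P = [:Q:] * ([:-S2,1:]^e * [:1,-1:]^B3)"
    unfolding P_def Q_def var_t_def var_s_def var_u_def T1_def S2_def A_def B1_def B2_def B3_def e_def
    by (simp add: poly_const_pow mult_to_poly diff_to_poly one_pCons mult_ac)
  have Q_eq: "Q * (1 - S2)^m3 = [:W:] * ([:-T1,1:]^e * [:1,-1:]^(B2 + m3))"
    unfolding Q_def W_def S2_def
    by (simp add: poly_const_pow mult_to_poly diff_to_poly one_pCons mult_ac power_add)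
  have W_eq: "W * (1 - T1)^m2 = [:-0,1:]^A * [:1,-1:]^(B1 + m2)"
    unfolding W_def T1_def
    by (simp add: one_pCons mult_ac power_add)
  have z3: "of_nat ?p = (0 :: 'p mod_ring poly poly)" by (simp add: of_nat_poly)
  have z2: "of_nat ?p = (0 :: 'p mod_ring poly)" by (simp add: of_nat_poly)
  have z1: "of_nat ?p = (0 :: 'p mod_ring)" by simp
  have K3: "of_nat (fact m3) * coeff ([:-S2,1:]^e * [:1,-1:]^B3) (?p-1)
       = - of_nat (fact e * fact B3) * (1-S2)^m3"
    using key[where x=S2, OF pr p_odd z3 c3] unfolding m3_def by simp
  have K2: "of_nat (fact m2) * coeff ([:-T1,1:]^e * [:1,-1:]^(B2 + m3)) (?p-1)
       = - of_nat (fact e * fact (B2 + m3)) * (1-T1)^m2"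
    using key[where x=T1, OF pr p_odd z2 c3(1) c2] unfolding m2_def by simp
  have K1: "of_nat (fact m1) * coeff ([:-(0::'p mod_ring),1:]^A * [:1,-1:]^(B1 + m2)) (?p-1)
       = - of_nat (fact A * fact (B1 + m2)) * (1-0)^m1"
    using key[where x=0, OF pr p_odd z1 c1] unfolding m1_def by simp
  define V where "V = Fp_integral3 ?p 1 1 1 P"
  have V_def': "V = coeff (coeff (coeff P (?p-1)) (?p-1)) (?p-1)"
    unfolding V_def Fp_integral3_def coeff3_def by simp
  have s1: "of_nat (fact m3) * coeff P (?p-1) = - of_nat (fact e * fact B3) * (Q * (1-S2)^m3)"
  proof -
    have "of_nat (fact m3) * coeff P (?p-1) = Q * (of_nat (fact m3) * coeff ([:-S2,1:]^e * [:1,-1:]^B3) (?p-1))"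
      unfolding P_eq coeff_const_mult by (simp only: mult_ac)
    then show ?thesis unfolding K3 by (simp add: mult_ac)
  qed
  have s2: "of_nat (fact m2) * (of_nat (fact m3) * coeff (coeff P (?p-1)) (?p-1))
      = of_nat (fact e * fact B3) * of_nat (fact e * fact (B2 + m3)) * (W * (1-T1)^m2)"
  proof -
    have "of_nat (fact m3) * coeff (coeff P (?p-1)) (?p-1) = coeff (of_nat (fact m3) * coeff P (?p-1)) (?p-1)"
      by (simp only: coeff_of_nat_mult)
    also have "\<dots> = - of_nat (fact e * fact B3) * (W * coeff ([:-T1,1:]^e * [:1,-1:]^(B2 + m3)) (?p-1))"
      unfolding s1 Q_eq mult_minus_left coeff_minus coeff_of_nat_mult coeff_const_mult by simp
    finally have "of_nat (fact m2) * (of_nat (fact m3) * coeff (coeff P (?p-1)) (?p-1))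
       = - of_nat (fact e * fact B3) * (W * (of_nat (fact m2) * coeff ([:-T1,1:]^e * [:1,-1:]^(B2 + m3)) (?p-1)))"
      by (simp add: mult_ac)
    then show ?thesis unfolding K2 by (simp add: mult_ac)
  qed
  have s3: "of_nat (fact m1) * (of_nat (fact m2) * (of_nat (fact m3) * V))
      = - (of_nat (fact e * fact B3) * of_nat (fact e * fact (B2 + m3)) * of_nat (fact A * fact (B1 + m2)))"
  proof -
    have "of_nat (fact m2) * (of_nat (fact m3) * V) = coeff (of_nat (fact m2) * (of_nat (fact m3) * coeff (coeff P (?p-1)) (?p-1))) (?p-1)"
      unfolding V_def' by (simp only: coeff_of_nat_mult)
    also have "\<dots> = of_nat (fact e * fact B3) * of_nat (fact e * fact (B2 + m3)) * coeff ([:-0,1:]^A * [:1,-1:]^(B1 + m2)) (?p-1)"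
      unfolding s2 W_eq by (simp only: of_nat_mult[symmetric] coeff_of_nat_mult)
    finally have h: "of_nat (fact m2) * (of_nat (fact m3) * V) = of_nat (fact e * fact B3) * of_nat (fact e * fact (B2 + m3)) * coeff ([:-0,1:]^A * [:1,-1:]^(B1 + m2)) (?p-1)" .
    have "of_nat (fact m1) * (of_nat (fact m2) * (of_nat (fact m3) * V))
       = of_nat (fact e * fact B3) * of_nat (fact e * fact (B2 + m3)) * (of_nat (fact m1) * coeff ([:-0,1:]^A * [:1,-1:]^(B1 + m2)) (?p-1))"
      unfolding h by (simp only: mult_ac)
    then show ?thesis unfolding K1 by simp
  qed
  have nz: "(of_nat (fact m) :: 'p mod_ring) \<noteq> 0" if "m < ?p" for m
  proof
    assume "(of_nat (fact m) :: 'p mod_ring) = 0"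
    then have "?p dvd fact m" by (rule of_nat_0_mod_ring_dvd)
    then show False using prime_dvd_fact_iff[OF pr] that by simp
  qed
  have lt: "m1 < ?p" "m2 < ?p" "m3 < ?p" using im1 im2 im3 f1 by simp_all
  have V_val: "V = - (of_nat (fact A * fact (B1 + m2)) / of_nat (fact m1))
        * (of_nat (fact e * fact (B2 + m3)) / of_nat (fact m2))
        * (of_nat (fact e * fact B3) / of_nat (fact m3))"
    by (rule solve[OF nz[OF lt(1)] nz[OF lt(2)] nz[OF lt(3)] s3])
  have LV: "Fp_integral3 CARD('p) 1 1 1
           ((var_t :: 'p mod_ring poly poly poly) ^ nat a * (1 - var_t) ^ nat b1
            * (var_s - var_t) ^ nat (int CARD('p) - c) * (1 - var_s) ^ nat b2
            * (var_u - var_s) ^ nat (int CARD('p) - c) * (1 - var_u) ^ nat b3) = V"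
    unfolding V_def P_def ..
  show ?thesis
    unfolding LV unfolding V_val n1 n2 n3 n4 n5 e_def[symmetric] A_def[symmetric] B3_def[symmetric]
    by (simp only: of_nat_mult)
qed

end
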